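(* Let $(A,\succ,\prec)$ be an anti-pre-Novikov algebra and $s\in A\otimes A$, and write $T=T_{s+\tau(s)}$. The following are equivalent: (a) $s+\tau(s)$ is invariant; (b) $T(L_{\succ}^*(x)\zeta)+L_{\star}(x)T(\zeta)=0$ and $T(L_{\circ}^*(x)\zeta)+L_{\odot}(x)T(\zeta)=0$ for all $x\in A,\zeta\in A^*$; (c) $L_{\succ}(x)T(\zeta)+T(L_{\star}^*(x)\zeta)=0$ and $T(L_{\odot}^*(x)\zeta)+L_{\circ}(x)T(\zeta)=0$ for all $x\in A,\zeta\in A^*$; (d) $L_{\star}^*(T(\zeta))\eta=R_{\succ}^*(T(\eta))\zeta$ and $R_{\odot}^*(T(\zeta))\eta=R_{\circ}^*(T(\eta))\zeta$ for all $\zeta,\eta\in A^*$.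
   Context: $A$ is finite-dimensional over a field $k$. An anti-pre-Novikov algebra is $(A,\succ,\prec)$ such that with $x\circ y=x\succ y+x\prec y$: $(x\circ y-y\circ x)\succ z=y\succ(x\succ z)-x\succ(y\succ z)$; $x\prec(y\circ z)=(y\succ x)\prec z-(x\prec y)\prec z-y\succ(x\prec z)$; $(x\circ y)\succ z=-(x\succ z)\prec y$; $(x\prec y)\prec z=(x\prec z)\prec y$; $(x\circ y-y\circ x)\prec z=x\succ(y\circ z)-y\succ(x\circ z)$. Notation: $L_\ast(x)y=x\ast y$, $R_\ast(x)y=y\ast x$ for $\ast\in\{\succ,\prec,\circ\}$; $L_{\star}=L_{\circ}+R_{\circ}$, $L_{\odot}=L_{\succ}+R_{\prec}$, $R_{\odot}=R_{\succ}+L_{\prec}$; for $f:A\to\mathrm{End}(A)$, $\langle f^*(x)\zeta,y\rangle=-\langle\zeta,f(x)y\rangle$; $\tau$ is the flip; for $r\in A\otimes A$, $T_r:A^*\to A$ is $\langle T_r(\zeta),\eta\rangle=\langle r,\zeta\otimes\eta\rangle$. An element $r\in A\otimes A$ is invariant if $(I\otimes L_{\star}(x)-L_{\succ}(x)\otimes I)r=0$ and $(L_{\circ}(x)\otimes I-I\otimes L_{\odot}(x))r=0$ for all $x\in A$. *)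

theory Defs
  imports Main "HOL-Library.Function_Algebras"
begin

text \<open>The finite-dimensional algebra A over the field 'k is represented in
coordinates w.r.t. a basis indexed by the finite type 'n: A = ('n => 'k).
The dual space A* is identified with ('n => 'k) via the pairing below
(coordinates in the dual basis), and A (x) A with ('n => 'n => 'k)
(coefficients w.r.t. e_i (x) e_j). Bilinear products are given by their
structure constants: e_i * e_j = sum_l c i j l e_l.\<close>

definition bvec :: "'n \<Rightarrow> 'n \<Rightarrow> 'k::field" where
  "bvec i = (\<lambda>j. if j = i then 1 else 0)"

definition bilin :: "('n::finite \<Rightarrow> 'n \<Rightarrow> 'n \<Rightarrow> 'k::field) \<Rightarrow> ('n \<Rightarrow> 'k) \<Rightarrow> ('n \<Rightarrow> 'k) \<Rightarrow> ('n \<Rightarrow> 'k)" where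
  "bilin c x y = (\<lambda>l. \<Sum>i\<in>UNIV. \<Sum>j\<in>UNIV. x i * y j * c i j l)"

definition pair :: "('n::finite \<Rightarrow> 'k::field) \<Rightarrow> ('n \<Rightarrow> 'k) \<Rightarrow> 'k" where
  "pair \<zeta> y = (\<Sum>i\<in>UNIV. \<zeta> i * y i)"

text \<open>For a linear operator F on A, dual_op F is determined by
<dual_op F zeta, y> = - <zeta, F y>.\<close>
definition dual_op :: "(('n::finite \<Rightarrow> 'k::field) \<Rightarrow> ('n \<Rightarrow> 'k)) \<Rightarrow> ('n \<Rightarrow> 'k) \<Rightarrow> ('n \<Rightarrow> 'k)" where
  "dual_op F \<zeta> = (\<lambda>i. - pair \<zeta> (F (bvec i)))"

definition tmap :: "(('n::finite \<Rightarrow> 'k::field) \<Rightarrow> ('n \<Rightarrow> 'k)) \<Rightarrow> (('n \<Rightarrow> 'k) \<Rightarrow> ('n \<Rightarrow> 'k))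
    \<Rightarrow> ('n \<Rightarrow> 'n \<Rightarrow> 'k) \<Rightarrow> ('n \<Rightarrow> 'n \<Rightarrow> 'k)" where
  "tmap F G r = (\<lambda>a b. \<Sum>i\<in>UNIV. \<Sum>j\<in>UNIV. r i j * F (bvec i) a * G (bvec j) b)"

definition flip :: "('n \<Rightarrow> 'n \<Rightarrow> 'k) \<Rightarrow> ('n \<Rightarrow> 'n \<Rightarrow> 'k)" where
  "flip r = (\<lambda>i j. r j i)"

text \<open>T_r : A* -> A with <T_r zeta, eta> = <r, zeta (x) eta>.\<close>
definition Tr :: "('n::finite \<Rightarrow> 'n \<Rightarrow> 'k::field) \<Rightarrow> ('n \<Rightarrow> 'k) \<Rightarrow> ('n \<Rightarrow> 'k)" where
  "Tr r \<zeta> = (\<lambda>j. \<Sum>i\<in>UNIV. r i j * \<zeta> i)"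

text \<open>S = structure constants of succ, P = structure constants of prec.\<close>
definition circ :: "('n::finite \<Rightarrow> 'n \<Rightarrow> 'n \<Rightarrow> 'k::field) \<Rightarrow> ('n \<Rightarrow> 'n \<Rightarrow> 'n \<Rightarrow> 'k) \<Rightarrow> ('n \<Rightarrow> 'k) \<Rightarrow> ('n \<Rightarrow> 'k) \<Rightarrow> ('n \<Rightarrow> 'k)" where
  "circ S P x y = bilin S x y + bilin P x y"

definition anti_pre_novikov :: "('n::finite \<Rightarrow> 'n \<Rightarrow> 'n \<Rightarrow> 'k::field) \<Rightarrow> ('n \<Rightarrow> 'n \<Rightarrow> 'n \<Rightarrow> 'k) \<Rightarrow> bool" where
  "anti_pre_novikov S P \<longleftrightarrow> (\<forall>x y z.
     bilin S (circ S P x y - circ S P y x) z = bilin S y (bilin S x z) - bilin S x (bilin S y z)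
   \<and> bilin P x (circ S P y z) = bilin P (bilin S y x) z - bilin P (bilin P x y) z - bilin S y (bilin P x z)
   \<and> bilin S (circ S P x y) z = - bilin P (bilin S x z) y
   \<and> bilin P (bilin P x y) z = bilin P (bilin P x z) y
   \<and> bilin P (circ S P x y - circ S P y x) z = bilin S x (circ S P y z) - bilin S y (circ S P x z))"

definition Lsucc where "Lsucc S x = (\<lambda>y. bilin S x y)"
definition Rsucc where "Rsucc S x = (\<lambda>y. bilin S y x)"
definition Lcirc where "Lcirc S P x = (\<lambda>y. circ S P x y)"
definition Rcirc where "Rcirc S P x = (\<lambda>y. circ S P y x)"
definition Lstar where "Lstar S P x = (\<lambda>y. circ S P x y + circ S P y x)"
definition Lodot where "Lodot S P x = (\<lambda>y. bilin S x y + bilin P y x)"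
definition Rodot where "Rodot S P x = (\<lambda>y. bilin S y x + bilin P x y)"

definition invariant :: "('n::finite \<Rightarrow> 'n \<Rightarrow> 'n \<Rightarrow> 'k::field) \<Rightarrow> ('n \<Rightarrow> 'n \<Rightarrow> 'n \<Rightarrow> 'k) \<Rightarrow> ('n \<Rightarrow> 'n \<Rightarrow> 'k) \<Rightarrow> bool" where
  "invariant S P r \<longleftrightarrow> (\<forall>x.
     tmap id (Lstar S P x) r - tmap (Lsucc S x) id r = 0
   \<and> tmap (Lcirc S P x) id r - tmap id (Lodot S P x) r = 0)"

end

theory Submission imports Defs begin

definition lin :: "(('n::finite \<Rightarrow> 'k::field) \<Rightarrow> ('n \<Rightarrow> 'k)) \<Rightarrow> bool" where
  "lin F \<longleftrightarrow> (\<forall>y. F y = (\<lambda>a. \<Sum>i\<in>UNIV. y i * F (bvec i) a))"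

lemma bvec_mult1[simp]: "bvec i j * (a::'k::field) = (if j = i then a else 0)"
  by (simp add: bvec_def)
lemma bvec_mult2[simp]: "(a::'k::field) * bvec i j = (if j = i then a else 0)"
  by (simp add: bvec_def)
lemma mult_if0[simp]: "(a::'k::field) * (if P then b else 0) = (if P then a * b else 0)"
  by simp
lemma mult_if0'[simp]: "(if P then b else 0) * (a::'k::field) = (if P then b * a else 0)"
  by simp
lemma sum_if0[simp]: "(\<Sum>j\<in>A. if P then f j else (0::'k::field)) = (if P then (\<Sum>j\<in>A. f j) else 0)"
  by simp

lemma bilin_bvec2: "bilin C x (bvec j) l = (\<Sum>i\<in>UNIV. x i * C i j l)"
  unfolding bilin_def by simp

lemma lin_bilin: "lin (bilin C x)"
  unfolding lin_def
proof (intro allI ext)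
  fix y a
  show "bilin C x y a = (\<Sum>j\<in>UNIV. y j * bilin C x (bvec j) a)"
    unfolding bilin_bvec2 unfolding bilin_def
    by (subst sum.swap) (simp add: sum_distrib_left mult_ac)
qed

lemma bilin_lin1: "bilin C x y = (\<lambda>a. \<Sum>i\<in>UNIV. x i * bilin C (bvec i) y a)"
  unfolding bilin_def by (simp add: sum_distrib_left mult_ac)

lemma bilin_add: "bilin (\<lambda>i j l. C i j l + D i j l) x y = bilin C x y + bilin D x y"
  unfolding bilin_def by (simp add: fun_eq_iff algebra_simps sum.distrib)

lemma bilin_swap: "bilin (\<lambda>i j l. C j i l) x y = bilin C y x"
  unfolding bilin_def by (subst sum.swap) (simp add: fun_eq_iff mult_ac)

lemma tmap_l: "tmap F id r a b = (\<Sum>i\<in>UNIV. r i b * F (bvec i) a)"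
  unfolding tmap_def by (simp add: mult_ac)
lemma tmap_r: "tmap id G r a b = (\<Sum>j\<in>UNIV. r a j * G (bvec j) b)"
  unfolding tmap_def by (simp add: mult_ac)

lemma Tr_dual: "Tr r (dual_op F \<zeta>) b = - (\<Sum>a\<in>UNIV. \<zeta> a * tmap F id r a b)"
  unfolding Tr_def dual_op_def pair_def tmap_l
  by (simp add: sum_distrib_left sum_negf mult_ac) (subst sum.swap, simp add: mult_ac)

lemma G_Tr: "lin G \<Longrightarrow> G (Tr r \<zeta>) b = (\<Sum>a\<in>UNIV. \<zeta> a * tmap id G r a b)"
  unfolding lin_def tmap_r Tr_def
  apply (drule spec[of _ "\<lambda>j. \<Sum>i\<in>UNIV. r i j * \<zeta> i"])
  apply simp
  by (simp add: sum_distrib_left sum_distrib_right mult_ac) (subst sum.swap, simp add: mult_ac)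

lemma coeff_eq:
  "(\<forall>\<zeta>. (\<lambda>b. (\<Sum>a\<in>UNIV. \<zeta> a * M a b)) = (\<lambda>b. \<Sum>a\<in>UNIV. \<zeta> a * N a b)) \<longleftrightarrow> M = (N :: 'n::finite \<Rightarrow> 'n \<Rightarrow> 'k::field)"
proof
  assume H: "\<forall>\<zeta>. (\<lambda>b. (\<Sum>a\<in>UNIV. \<zeta> a * M a b)) = (\<lambda>b. \<Sum>a\<in>UNIV. \<zeta> a * N a b)"
  show "M = N"
  proof (intro ext)
    fix a b
    from H[rule_format, of "bvec a"] have "(\<Sum>c\<in>UNIV. bvec a c * M c b) = (\<Sum>c\<in>UNIV. bvec a c * N c b)"
      by (metis)
    then show "M a b = N a b" by simp
  qed
qed simp

lemma lemA:
  assumes "lin G"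
  shows "(tmap F id r = tmap id G r) \<longleftrightarrow> (\<forall>\<zeta>. Tr r (dual_op F \<zeta>) + G (Tr r \<zeta>) = 0)"
proof -
  have "(Tr r (dual_op F \<zeta>) + G (Tr r \<zeta>) = 0) \<longleftrightarrow>
     (\<lambda>b. (\<Sum>a\<in>UNIV. \<zeta> a * tmap id G r a b)) = (\<lambda>b. \<Sum>a\<in>UNIV. \<zeta> a * tmap F id r a b)" for \<zeta>
    by (simp add: fun_eq_iff Tr_dual G_Tr[OF assms] add_eq_0_iff eq_neg_iff_add_eq_0)
  then have "(\<forall>\<zeta>. Tr r (dual_op F \<zeta>) + G (Tr r \<zeta>) = 0) \<longleftrightarrow> tmap id G r = tmap F id r"
    by (simp only: coeff_eq)
  then show ?thesis by auto
qed

lemma lemFlip: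
  assumes "flip r = r"
  shows "(tmap F id r = tmap id G r) \<longleftrightarrow> (tmap G id r = tmap id F r)"
proof -
  have sym: "r i j = r j i" for i j using assms unfolding flip_def by metis
  have "tmap F id r a b = tmap id F r b a" for F a b
    unfolding tmap_l tmap_r using sym by simp
  then show ?thesis by (metis ext)
qed


lemma pair_bvec[simp]: "pair (bvec b) u = u b"
  unfolding pair_def by simp

lemma vec_eq_pair: "(u = v) \<longleftrightarrow> (\<forall>\<eta>. pair \<eta> u = pair \<eta> v)"
proof (rule iffI)
  assume H: "\<forall>\<eta>. pair \<eta> u = pair \<eta> v"
  show "u = v"
  proof
    fix b show "u b = v b" using H[rule_format, of "bvec b"] by simp
  qed
qed simp

lemma pair_add: "pair \<eta> (u + v) = pair \<eta> u + pair \<eta> v"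
  unfolding pair_def by (simp add: algebra_simps sum.distrib)

lemma pair_zero: "pair \<eta> 0 = 0"
  unfolding pair_def by simp

lemma pair_T_sym:
  assumes "flip r = r" shows "pair \<eta> (Tr r \<zeta>) = pair \<zeta> (Tr r \<eta>)"
proof -
  have sym: "r i j = r j i" for i j using assms unfolding flip_def by metis
  have "pair \<eta> (Tr r \<zeta>) = (\<Sum>j\<in>UNIV. \<Sum>i\<in>UNIV. \<eta> j * (r i j * \<zeta> i))"
    unfolding pair_def Tr_def by (simp add: sum_distrib_left)
  also have "\<dots> = (\<Sum>i\<in>UNIV. \<Sum>j\<in>UNIV. \<eta> j * (r i j * \<zeta> i))"
    by (rule sum.swap)
  also have "\<dots> = pair \<zeta> (Tr r \<eta>)"
    unfolding pair_def Tr_def by (simp add: sum_distrib_left sym mult_ac)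
  finally show ?thesis .
qed

lemma pair_dual: "lin F \<Longrightarrow> pair (dual_op F \<zeta>) y = - pair \<zeta> (F y)"
  unfolding lin_def dual_op_def pair_def
  apply (drule spec[of _ y])
  apply (simp add: sum_distrib_left sum_distrib_right sum_negf)
  apply (subst sum.swap)
  by (simp add: mult_ac)

lemma pair_lin1: "pair \<eta> (bilin C x y) = (\<Sum>i\<in>UNIV. x i * pair \<eta> (bilin C (bvec i) y))"
  apply (subst bilin_lin1)
  unfolding pair_def
  apply (simp add: sum_distrib_left)
  apply (subst sum.swap)
  by (simp add: mult_ac)

lemma lemD:
  assumes sym: "flip r = r"
  shows "(\<forall>x \<zeta>. bilin C x (Tr r \<zeta>) + Tr r (dual_op (bilin D x) \<zeta>) = 0) \<longleftrightarrow>
         (\<forall>\<zeta> \<eta>. dual_op (\<lambda>y. bilin D y (Tr r \<zeta>)) \<eta> = dual_op (\<lambda>y. bilin C y (Tr r \<eta>)) \<zeta>)"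
proof -
  have s1: "(bilin C x (Tr r \<zeta>) + Tr r (dual_op (bilin D x) \<zeta>) = 0) \<longleftrightarrow>
     (\<forall>\<eta>. pair \<eta> (bilin C x (Tr r \<zeta>)) = pair \<zeta> (bilin D x (Tr r \<eta>)))" for x \<zeta>
  proof -
    have "pair \<eta> (Tr r (dual_op (bilin D x) \<zeta>)) = - pair \<zeta> (bilin D x (Tr r \<eta>))" for \<eta>
      by (simp add: pair_T_sym[OF sym, of \<eta> "dual_op (bilin D x) \<zeta>"] pair_dual[OF lin_bilin])
    then show ?thesis
      by (simp add: vec_eq_pair[of _ 0] pair_add pair_zero add_eq_0_iff)
  qed
  have s2: "(dual_op (\<lambda>y. bilin D y (Tr r \<zeta>)) \<eta> = dual_op (\<lambda>y. bilin C y (Tr r \<eta>)) \<zeta>) \<longleftrightarrow>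
     (\<forall>i. pair \<eta> (bilin D (bvec i) (Tr r \<zeta>)) = pair \<zeta> (bilin C (bvec i) (Tr r \<eta>)))" for \<zeta> \<eta>
    unfolding dual_op_def fun_eq_iff by simp
  have s3: "(\<forall>i. pair \<eta> (bilin D (bvec i) (Tr r \<zeta>)) = pair \<zeta> (bilin C (bvec i) (Tr r \<eta>))) \<longleftrightarrow>
     (\<forall>x. pair \<eta> (bilin D x (Tr r \<zeta>)) = pair \<zeta> (bilin C x (Tr r \<eta>)))" for \<zeta> \<eta>
  proof
    assume H: "\<forall>i. pair \<eta> (bilin D (bvec i) (Tr r \<zeta>)) = pair \<zeta> (bilin C (bvec i) (Tr r \<eta>))"
    show "\<forall>x. pair \<eta> (bilin D x (Tr r \<zeta>)) = pair \<zeta> (bilin C x (Tr r \<eta>))"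
      proof
      fix x
      show "pair \<eta> (bilin D x (Tr r \<zeta>)) = pair \<zeta> (bilin C x (Tr r \<eta>))"
        apply (subst pair_lin1, subst (2) pair_lin1)
        using H by simp
    qed
  next
    assume H: "\<forall>x. pair \<eta> (bilin D x (Tr r \<zeta>)) = pair \<zeta> (bilin C x (Tr r \<eta>))"
    then show "\<forall>i. pair \<eta> (bilin D (bvec i) (Tr r \<zeta>)) = pair \<zeta> (bilin C (bvec i) (Tr r \<eta>))" by blast
  qed
  show ?thesis unfolding s1 s2 s3
  proof (intro iffI allI)
    fix \<zeta> \<eta> x
    assume H: "\<forall>x \<zeta> \<eta>. pair \<eta> (bilin C x (Tr r \<zeta>)) = pair \<zeta> (bilin D x (Tr r \<eta>))"
    show "pair \<eta> (bilin D x (Tr r \<zeta>)) = pair \<zeta> (bilin C x (Tr r \<eta>))"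
      using spec[OF spec[OF spec[OF H, of x], of \<eta>], of \<zeta>] by simp
  next
    fix \<zeta> \<eta> x
    assume H: "\<forall>\<zeta> \<eta> x. pair \<eta> (bilin D x (Tr r \<zeta>)) = pair \<zeta> (bilin C x (Tr r \<eta>))"
    show "pair \<eta> (bilin C x (Tr r \<zeta>)) = pair \<zeta> (bilin D x (Tr r \<eta>))"
      using spec[OF spec[OF spec[OF H, of \<eta>], of \<zeta>], of x] by simp
  qed
qed


definition Cst :: "('n \<Rightarrow> 'n \<Rightarrow> 'n \<Rightarrow> 'k::field) \<Rightarrow> ('n \<Rightarrow> 'n \<Rightarrow> 'n \<Rightarrow> 'k) \<Rightarrow> ('n \<Rightarrow> 'n \<Rightarrow> 'n \<Rightarrow> 'k)" where
  "Cst S P = (\<lambda>i j l. S i j l + P i j l + S j i l + P j i l)"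
definition Cod :: "('n \<Rightarrow> 'n \<Rightarrow> 'n \<Rightarrow> 'k::field) \<Rightarrow> ('n \<Rightarrow> 'n \<Rightarrow> 'n \<Rightarrow> 'k) \<Rightarrow> ('n \<Rightarrow> 'n \<Rightarrow> 'n \<Rightarrow> 'k)" where
  "Cod S P = (\<lambda>i j l. S i j l + P j i l)"
definition Cci :: "('n \<Rightarrow> 'n \<Rightarrow> 'n \<Rightarrow> 'k::field) \<Rightarrow> ('n \<Rightarrow> 'n \<Rightarrow> 'n \<Rightarrow> 'k) \<Rightarrow> ('n \<Rightarrow> 'n \<Rightarrow> 'n \<Rightarrow> 'k)" where
  "Cci S P = (\<lambda>i j l. S i j l + P i j l)"

lemma bilin_Cst: "bilin (Cst S P) x y = bilin S x y + bilin P x y + bilin S y x + bilin P y x"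
  unfolding Cst_def
  apply (subst bilin_add, subst bilin_add, subst bilin_add)
  by (simp only: bilin_swap[of S] bilin_swap[of P])
lemma bilin_Cod: "bilin (Cod S P) x y = bilin S x y + bilin P y x"
  unfolding Cod_def
  apply (subst bilin_add)
  by (simp only: bilin_swap[of P])
lemma bilin_Cci: "bilin (Cci S P) x y = bilin S x y + bilin P x y"
  unfolding Cci_def by (rule bilin_add)

lemma e1: "Lsucc S x = bilin S x" unfolding Lsucc_def by simp
lemma e2: "Lstar S P x = bilin (Cst S P) x" unfolding Lstar_def circ_def by (simp add: bilin_Cst fun_eq_iff)
lemma e3: "Lcirc S P x = bilin (Cci S P) x" unfolding Lcirc_def circ_def by (simp add: bilin_Cci fun_eq_iff)
lemma e4: "Lodot S P x = bilin (Cod S P) x" unfolding Lodot_def by (simp add: bilin_Cod fun_eq_iff)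
lemma e5: "Rsucc S u = (\<lambda>y. bilin S y u)" unfolding Rsucc_def by simp
lemma e6: "Lstar S P u = (\<lambda>y. bilin (Cst S P) y u)" unfolding Lstar_def circ_def by (simp add: bilin_Cst fun_eq_iff)
lemma e7: "Rodot S P u = (\<lambda>y. bilin (Cod S P) y u)" unfolding Rodot_def by (simp add: bilin_Cod fun_eq_iff)
lemma e8: "Rcirc S P u = (\<lambda>y. bilin (Cci S P) y u)" unfolding Rcirc_def circ_def by (simp add: bilin_Cci fun_eq_iff)

theorem mainTheorem10:
  fixes S P :: "'n::finite \<Rightarrow> 'n \<Rightarrow> 'n \<Rightarrow> 'k::field"
    and s :: "'n \<Rightarrow> 'n \<Rightarrow> 'k"
  assumes "anti_pre_novikov S P"
  defines "T \<equiv> Tr (s + flip s)"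
  shows "(invariant S P (s + flip s) \<longleftrightarrow>
           (\<forall>x \<zeta>. T (dual_op (Lsucc S x) \<zeta>) + Lstar S P x (T \<zeta>) = 0
                 \<and> T (dual_op (Lcirc S P x) \<zeta>) + Lodot S P x (T \<zeta>) = 0))
       \<and> ((\<forall>x \<zeta>. T (dual_op (Lsucc S x) \<zeta>) + Lstar S P x (T \<zeta>) = 0
                 \<and> T (dual_op (Lcirc S P x) \<zeta>) + Lodot S P x (T \<zeta>) = 0) \<longleftrightarrow>
           (\<forall>x \<zeta>. Lsucc S x (T \<zeta>) + T (dual_op (Lstar S P x) \<zeta>) = 0
                 \<and> T (dual_op (Lodot S P x) \<zeta>) + Lcirc S P x (T \<zeta>) = 0))
       \<and> ((\<forall>x \<zeta>. Lsucc S x (T \<zeta>) + T (dual_op (Lstar S P x) \<zeta>) = 0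
                 \<and> T (dual_op (Lodot S P x) \<zeta>) + Lcirc S P x (T \<zeta>) = 0) \<longleftrightarrow>
           (\<forall>\<zeta> \<eta>. dual_op (Lstar S P (T \<zeta>)) \<eta> = dual_op (Rsucc S (T \<eta>)) \<zeta>
                 \<and> dual_op (Rodot S P (T \<zeta>)) \<eta> = dual_op (Rcirc S P (T \<eta>)) \<zeta>))"
proof -
  let ?r = "s + flip s"
  have sym: "flip ?r = ?r" unfolding flip_def by (simp add: fun_eq_iff add.commute)
  have T: "T = Tr ?r" using T_def by simp
  let ?X = "\<forall>x. tmap (bilin S x) id ?r = tmap id (bilin (Cst S P) x) ?r
              \<and> tmap (bilin (Cci S P) x) id ?r = tmap id (bilin (Cod S P) x) ?r"
  have a: "invariant S P ?r \<longleftrightarrow> ?X"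
    unfolding invariant_def e1 e2 e3 e4 right_minus_eq by (simp add: eq_commute)
  have b: "(\<forall>x \<zeta>. T (dual_op (Lsucc S x) \<zeta>) + Lstar S P x (T \<zeta>) = 0
                 \<and> T (dual_op (Lcirc S P x) \<zeta>) + Lodot S P x (T \<zeta>) = 0) \<longleftrightarrow> ?X"
    unfolding e1 e2 e3 e4 T all_conj_distrib lemA[OF lin_bilin] by blast
  have c: "(\<forall>x \<zeta>. Lsucc S x (T \<zeta>) + T (dual_op (Lstar S P x) \<zeta>) = 0
                 \<and> T (dual_op (Lodot S P x) \<zeta>) + Lcirc S P x (T \<zeta>) = 0) \<longleftrightarrow> ?X"
  proof -
    have "(\<forall>x \<zeta>. Lsucc S x (T \<zeta>) + T (dual_op (Lstar S P x) \<zeta>) = 0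
                 \<and> T (dual_op (Lodot S P x) \<zeta>) + Lcirc S P x (T \<zeta>) = 0) \<longleftrightarrow>
          (\<forall>x. tmap (bilin (Cst S P) x) id ?r = tmap id (bilin S x) ?r
              \<and> tmap (bilin (Cod S P) x) id ?r = tmap id (bilin (Cci S P) x) ?r)"
      unfolding e1 e2 e3 e4 T all_conj_distrib lemA[OF lin_bilin] by (simp add: add.commute)
    also have "\<dots> \<longleftrightarrow> ?X" unfolding lemFlip[OF sym, of "bilin (Cst S P) _"] lemFlip[OF sym, of "bilin (Cod S P) _"] by blast
    finally show ?thesis .
  qed
  have d: "(\<forall>x \<zeta>. Lsucc S x (T \<zeta>) + T (dual_op (Lstar S P x) \<zeta>) = 0
                 \<and> T (dual_op (Lodot S P x) \<zeta>) + Lcirc S P x (T \<zeta>) = 0) \<longleftrightarrow>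
           (\<forall>\<zeta> \<eta>. dual_op (Lstar S P (T \<zeta>)) \<eta> = dual_op (Rsucc S (T \<eta>)) \<zeta>
                 \<and> dual_op (Rodot S P (T \<zeta>)) \<eta> = dual_op (Rcirc S P (T \<eta>)) \<zeta>)"
  proof -
    have L: "(\<forall>x \<zeta>. Lsucc S x (T \<zeta>) + T (dual_op (Lstar S P x) \<zeta>) = 0
                 \<and> T (dual_op (Lodot S P x) \<zeta>) + Lcirc S P x (T \<zeta>) = 0) \<longleftrightarrow>
          (\<forall>x \<zeta>. bilin S x (Tr ?r \<zeta>) + Tr ?r (dual_op (bilin (Cst S P) x) \<zeta>) = 0) \<and>
          (\<forall>x \<zeta>. bilin (Cci S P) x (Tr ?r \<zeta>) + Tr ?r (dual_op (bilin (Cod S P) x) \<zeta>) = 0)"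
      unfolding e1 e2 e3 e4 T all_conj_distrib by (simp add: add.commute)
    have R: "(\<forall>\<zeta> \<eta>. dual_op (Lstar S P (T \<zeta>)) \<eta> = dual_op (Rsucc S (T \<eta>)) \<zeta>
                 \<and> dual_op (Rodot S P (T \<zeta>)) \<eta> = dual_op (Rcirc S P (T \<eta>)) \<zeta>) \<longleftrightarrow>
          (\<forall>\<zeta> \<eta>. dual_op (\<lambda>y. bilin (Cst S P) y (Tr ?r \<zeta>)) \<eta> = dual_op (\<lambda>y. bilin S y (Tr ?r \<eta>)) \<zeta>) \<and>
          (\<forall>\<zeta> \<eta>. dual_op (\<lambda>y. bilin (Cod S P) y (Tr ?r \<zeta>)) \<eta> = dual_op (\<lambda>y. bilin (Cci S P) y (Tr ?r \<eta>)) \<zeta>)"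
      unfolding e5 e6 e7 e8 T all_conj_distrib by simp
    show ?thesis unfolding L R lemD[OF sym] ..
  qed
  show ?thesis using a b c d by blast
qed

end
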